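(* Let $\rho$ be a critical radius function on $\mathbb{R}^n$ and $0\le\tilde\delta\le\delta<1$. Then for every $f\in L^1_{loc}(\mathbb{R}^n)$ and every $x\in\mathbb{R}^n$, $$f^{\sharp,\rho}_{\tilde\delta}(x)\le2\,M^{\rho,loc}_{\delta-\tilde\delta}\big(f^{\sharp,\rho}_\delta\big)(x).$$
   Context: A critical radius function is $\rho:\mathbb{R}^n\to(0,\infty)$ with constants $c_\rho,N_\rho\ge1$ such that $c_\rho^{-1}\rho(x)\big(1+\frac{|x-y|}{\rho(x)}\big)^{-N_\rho}\le\rho(y)\le c_\rho\rho(x)\big(1+\frac{|x-y|}{\rho(x)}\big)^{N_\rho/(N_\rho+1)}$ for all $x,y$. $\mathcal{B}_\rho$ is the family of balls $B(x,r)$ with $0<r\le\rho(x)$. For $0\le\delta<1$ and $f\in L^1_{loc}$: $f^{\sharp,\rho}_\delta(x)=\sup_{B\in\mathcal{B}_\rho}\frac{\chi_B(x)}{|B|^{1+\delta/n}}\int_B|f-f_B|+\sup_{B=B(z,\rho(z)),\,z\in\mathbb{R}^n}\frac{\chi_B(x)}{|B|^{1+\delta/n}}\int_B|f|$ ($f_B$ the average of $f$ on $B$), and $M^{\rho,loc}_\delta f(x)=\sup_{B\in\mathcal{B}_\rho}\frac{\chi_B(x)}{|B|^{1-\delta/n}}\int_B|f|$. *)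

theory Defs
  imports "HOL-Analysis.Analysis"
begin

definition critical_radius :: "('a::euclidean_space \<Rightarrow> real) \<Rightarrow> bool" where
  "critical_radius \<rho> \<longleftrightarrow> (\<forall>x. 0 < \<rho> x) \<and>
     (\<exists>c N::real. 1 \<le> c \<and> 1 \<le> N \<and>
       (\<forall>x y. (1 / c) * \<rho> x * (1 + dist x y / \<rho> x) powr (- N) \<le> \<rho> y \<and>
              \<rho> y \<le> c * \<rho> x * (1 + dist x y / \<rho> x) powr (N / (N + 1))))"

definition locally_integrable :: "('a::euclidean_space \<Rightarrow> real) \<Rightarrow> bool" where
  "locally_integrable f \<longleftrightarrow> (\<forall>K. compact K \<longrightarrow> set_integrable lebesgue K f)"

definition avg :: "('a::euclidean_space \<Rightarrow> real) \<Rightarrow> 'a set \<Rightarrow> real" where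
  "avg f B = (set_lebesgue_integral lebesgue B f) / measure lebesgue B"

definition sharp_rho :: "('a::euclidean_space \<Rightarrow> real) \<Rightarrow> real \<Rightarrow> ('a \<Rightarrow> real) \<Rightarrow> 'a \<Rightarrow> ennreal" where
  "sharp_rho \<rho> \<delta> f x =
     (SUP zr \<in> {(z, r). 0 < r \<and> r \<le> \<rho> z}.
        indicator (ball (fst zr) (snd zr)) x
        * ennreal (1 / measure lebesgue (ball (fst zr) (snd zr)) powr (1 + \<delta> / real DIM('a)))
        * set_nn_integral lebesgue (ball (fst zr) (snd zr))
            (\<lambda>y. ennreal \<bar>f y - avg f (ball (fst zr) (snd zr))\<bar>))
   + (SUP z. indicator (ball z (\<rho> z)) x
        * ennreal (1 / measure lebesgue (ball z (\<rho> z)) powr (1 + \<delta> / real DIM('a)))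
        * set_nn_integral lebesgue (ball z (\<rho> z)) (\<lambda>y. ennreal \<bar>f y\<bar>))"

definition max_rho_loc :: "('a::euclidean_space \<Rightarrow> real) \<Rightarrow> real \<Rightarrow> ('a \<Rightarrow> ennreal) \<Rightarrow> 'a \<Rightarrow> ennreal" where
  "max_rho_loc \<rho> \<delta> g x =
     (SUP zr \<in> {(z, r). 0 < r \<and> r \<le> \<rho> z}.
        indicator (ball (fst zr) (snd zr)) x
        * ennreal (1 / measure lebesgue (ball (fst zr) (snd zr)) powr (1 - \<delta> / real DIM('a)))
        * set_nn_integral lebesgue (ball (fst zr) (snd zr)) g)"

end

theory Submission
  imports Defs
begin

lemma ball_meas:
  fixes z :: "'a::euclidean_space"
  assumes "0 < r"
  shows "0 < measure lebesgue (ball z r)"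
    and "emeasure lebesgue (ball z r) = ennreal (measure lebesgue (ball z r))"
proof -
  have m: "measure lebesgue (ball z r) = measure lborel (ball z r)" by simp
  show "0 < measure lebesgue (ball z r)" using content_ball_pos[OF assms] m by simp
  show "emeasure lebesgue (ball z r) = ennreal (measure lebesgue (ball z r))"
    using emeasure_lborel_ball_finite[of z r]
    by (simp add: emeasure_eq_ennreal_measure)
qed

lemma key:
  fixes \<rho> :: "'a::euclidean_space \<Rightarrow> real" and g :: "'a \<Rightarrow> ennreal"
  assumes r: "0 < r" "r \<le> \<rho> z" and x: "x \<in> ball z r"
    and hg: "\<And>y. y \<in> ball z r \<Longrightarrow>
       ennreal (1 / measure lebesgue (ball z r) powr (1 + \<delta> / real DIM('a))) * I \<le> g y"
  shows "ennreal (1 / measure lebesgue (ball z r) powr (1 + \<delta>' / real DIM('a))) * I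
     \<le> max_rho_loc \<rho> (\<delta> - \<delta>') g x"
proof -
  define m where "m = measure lebesgue (ball z r)"
  define n where "n = real DIM('a)"
  have m0: "0 < m" using ball_meas(1)[OF r(1)] m_def by simp
  have em: "emeasure lebesgue (ball z r) = ennreal m" using ball_meas(2)[OF r(1)] m_def by simp
  define a where "a = 1 / m powr (1 - (\<delta> - \<delta>') / n)"
  define b where "b = 1 / m powr (1 + \<delta> / n)"
  have a0: "0 \<le> a" "0 \<le> b" using m0 by (auto simp: a_def b_def)
  have abm: "a * b * m = 1 / m powr (1 + \<delta>' / n)"
  proof -
    have "a * b * m = m powr (-(1 - (\<delta> - \<delta>') / n)) * m powr (-(1 + \<delta> / n)) * m powr 1"
      using m0 unfolding a_def b_def powr_minus by (simp add: divide_inverse del: minus_diff_eq)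
    also have "\<dots> = m powr (-(1 - (\<delta> - \<delta>') / n) + -(1 + \<delta> / n) + 1)"
      by (simp only: powr_add)
    also have "-(1 - (\<delta> - \<delta>') / n) + -(1 + \<delta> / n) + 1 = -(1 + \<delta>' / n)"
      by (simp add: diff_divide_distrib algebra_simps)
    also have "m powr (-(1 + \<delta>' / n)) = 1 / m powr (1 + \<delta>' / n)"
      unfolding powr_minus by (simp add: divide_inverse del: minus_add_distrib)
    finally show ?thesis .
  qed
  have int: "ennreal b * I * ennreal m \<le> set_nn_integral lebesgue (ball z r) g"
  proof -
    have "ennreal b * I * ennreal m = (\<integral>\<^sup>+ y. (ennreal b * I) * indicator (ball z r) y \<partial>lebesgue)"
      by (subst nn_integral_cmult_indicator) (auto simp: em)
    also have "\<dots> \<le> (\<integral>\<^sup>+ y. g y * indicator (ball z r) y \<partial>lebesgue)"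
      apply (rule nn_integral_mono)
      using hg by (auto simp: indicator_def b_def m_def n_def)
    finally show ?thesis by simp
  qed
  have "ennreal (1 / m powr (1 + \<delta>' / n)) * I = ennreal a * (ennreal b * I * ennreal m)"
    using a0 m0 abm[symmetric]
    by (simp add: ennreal_mult' ennreal_mult'' mult.assoc mult.commute mult.left_commute)
  also have "\<dots> \<le> ennreal a * set_nn_integral lebesgue (ball z r) g"
    by (rule mult_left_mono[OF int]) simp
  also have "\<dots> = indicator (ball (fst (z, r)) (snd (z, r))) x
        * ennreal (1 / measure lebesgue (ball (fst (z,r)) (snd (z,r))) powr (1 - (\<delta> - \<delta>') / real DIM('a)))
        * set_nn_integral lebesgue (ball (fst (z,r)) (snd (z,r))) g"
    using x by (simp add: a_def m_def n_def)
  also have "\<dots> \<le> max_rho_loc \<rho> (\<delta> - \<delta>') g x"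
    unfolding max_rho_loc_def
    by (rule SUP_upper) (use r in auto)
  finally show ?thesis by (simp add: m_def n_def)
qed

theorem lemma4:
  fixes \<rho> :: "'a::euclidean_space \<Rightarrow> real" and f :: "'a \<Rightarrow> real"
    and \<delta> \<delta>' :: real and x :: 'a
  assumes "critical_radius \<rho>"
    and "0 \<le> \<delta>'" and "\<delta>' \<le> \<delta>" and "\<delta> < 1"
    and "locally_integrable f"
  shows "sharp_rho \<rho> \<delta>' f x \<le> 2 * max_rho_loc \<rho> (\<delta> - \<delta>') (sharp_rho \<rho> \<delta> f) x"
proof -
  have rpos: "\<And>z. 0 < \<rho> z" using assms(1) unfolding critical_radius_def by blast
  let ?g = "sharp_rho \<rho> \<delta> f"
  let ?M = "max_rho_loc \<rho> (\<delta> - \<delta>') ?g x"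
  have S1: "(SUP zr \<in> {(z, r). 0 < r \<and> r \<le> \<rho> z}.
        indicator (ball (fst zr) (snd zr)) x
        * ennreal (1 / measure lebesgue (ball (fst zr) (snd zr)) powr (1 + \<delta>' / real DIM('a)))
        * set_nn_integral lebesgue (ball (fst zr) (snd zr))
            (\<lambda>y. ennreal \<bar>f y - avg f (ball (fst zr) (snd zr))\<bar>)) \<le> ?M"
  proof (rule SUP_least, clarify)
    fix z r assume r: "0 < r" "r \<le> \<rho> z"
    show "indicator (ball (fst (z, r)) (snd (z, r))) x
        * ennreal (1 / measure lebesgue (ball (fst (z, r)) (snd (z, r))) powr (1 + \<delta>' / real DIM('a)))
        * set_nn_integral lebesgue (ball (fst (z, r)) (snd (z, r)))
            (\<lambda>y. ennreal \<bar>f y - avg f (ball (fst (z, r)) (snd (z, r)))\<bar>) \<le> ?M"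
    proof (cases "x \<in> ball z r")
      case False then show ?thesis by simp
    next
      case True
      note xin = this
      have "ennreal (1 / measure lebesgue (ball z r) powr (1 + \<delta>' / real DIM('a)))
          * set_nn_integral lebesgue (ball z r) (\<lambda>y. ennreal \<bar>f y - avg f (ball z r)\<bar>) \<le> ?M"
      proof (rule key[where \<rho>=\<rho>, OF r(1) r(2) xin])
        fix y assume y: "y \<in> ball z r"
        have "ennreal (1 / measure lebesgue (ball z r) powr (1 + \<delta> / real DIM('a)))
            * set_nn_integral lebesgue (ball z r) (\<lambda>y. ennreal \<bar>f y - avg f (ball z r)\<bar>)
          = indicator (ball (fst (z, r)) (snd (z, r))) y
        * ennreal (1 / measure lebesgue (ball (fst (z, r)) (snd (z, r))) powr (1 + \<delta> / real DIM('a)))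
        * set_nn_integral lebesgue (ball (fst (z, r)) (snd (z, r)))
            (\<lambda>y. ennreal \<bar>f y - avg f (ball (fst (z, r)) (snd (z, r)))\<bar>)"
          using y by simp
        also have "\<dots> \<le> (SUP zr \<in> {(z, r). 0 < r \<and> r \<le> \<rho> z}.
        indicator (ball (fst zr) (snd zr)) y
        * ennreal (1 / measure lebesgue (ball (fst zr) (snd zr)) powr (1 + \<delta> / real DIM('a)))
        * set_nn_integral lebesgue (ball (fst zr) (snd zr))
            (\<lambda>y. ennreal \<bar>f y - avg f (ball (fst zr) (snd zr))\<bar>))"
          by (rule SUP_upper) (use r in auto)
        also have "\<dots> \<le> ?g y" unfolding sharp_rho_def by (rule add_increasing2) auto
        finally show "ennreal (1 / measure lebesgue (ball z r) powr (1 + \<delta> / real DIM('a)))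
            * set_nn_integral lebesgue (ball z r) (\<lambda>y. ennreal \<bar>f y - avg f (ball z r)\<bar>) \<le> ?g y" .
      qed
      then show ?thesis using True by simp
    qed
  qed
  have S2: "(SUP z. indicator (ball z (\<rho> z)) x
        * ennreal (1 / measure lebesgue (ball z (\<rho> z)) powr (1 + \<delta>' / real DIM('a)))
        * set_nn_integral lebesgue (ball z (\<rho> z)) (\<lambda>y. ennreal \<bar>f y\<bar>)) \<le> ?M"
  proof (rule SUP_least)
    fix z
    have r: "0 < \<rho> z" "\<rho> z \<le> \<rho> z" using rpos by auto
    show "indicator (ball z (\<rho> z)) x
        * ennreal (1 / measure lebesgue (ball z (\<rho> z)) powr (1 + \<delta>' / real DIM('a)))
        * set_nn_integral lebesgue (ball z (\<rho> z)) (\<lambda>y. ennreal \<bar>f y\<bar>) \<le> ?M"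
    proof (cases "x \<in> ball z (\<rho> z)")
      case False then show ?thesis by simp
    next
      case True
      note xin = this
      have "ennreal (1 / measure lebesgue (ball z (\<rho> z)) powr (1 + \<delta>' / real DIM('a)))
          * set_nn_integral lebesgue (ball z (\<rho> z)) (\<lambda>y. ennreal \<bar>f y\<bar>) \<le> ?M"
      proof (rule key[where \<rho>=\<rho>, OF r(1) r(2) xin])
        fix y assume y: "y \<in> ball z (\<rho> z)"
        have "ennreal (1 / measure lebesgue (ball z (\<rho> z)) powr (1 + \<delta> / real DIM('a)))
            * set_nn_integral lebesgue (ball z (\<rho> z)) (\<lambda>y. ennreal \<bar>f y\<bar>)
          = indicator (ball z (\<rho> z)) y
        * ennreal (1 / measure lebesgue (ball z (\<rho> z)) powr (1 + \<delta> / real DIM('a)))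
        * set_nn_integral lebesgue (ball z (\<rho> z)) (\<lambda>y. ennreal \<bar>f y\<bar>)"
          using y by simp
        also have "\<dots> \<le> (SUP z. indicator (ball z (\<rho> z)) y
        * ennreal (1 / measure lebesgue (ball z (\<rho> z)) powr (1 + \<delta> / real DIM('a)))
        * set_nn_integral lebesgue (ball z (\<rho> z)) (\<lambda>y. ennreal \<bar>f y\<bar>))"
          by (rule SUP_upper) auto
        also have "\<dots> \<le> ?g y" unfolding sharp_rho_def by (rule add_increasing) auto
        finally show "ennreal (1 / measure lebesgue (ball z (\<rho> z)) powr (1 + \<delta> / real DIM('a)))
            * set_nn_integral lebesgue (ball z (\<rho> z)) (\<lambda>y. ennreal \<bar>f y\<bar>) \<le> ?g y" .
      qed
      then show ?thesis using True by simp
    qed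
  qed
  have "sharp_rho \<rho> \<delta>' f x \<le> ?M + ?M"
    unfolding sharp_rho_def[of \<rho> \<delta>' f x] by (rule add_mono[OF S1 S2])
  also have "\<dots> = 2 * ?M" by (simp add: mult_2)
  finally show ?thesis .
qed

end
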